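(* Let $n$ be odd and squarefree, let $p'$ be a prime divisor of $n$, and let $A=L(n;p')$. Let $S=(x_1,\ldots,x_l)$ be a sequence in $\mathbb{Z}_n$ such that for every prime divisor $p$ of $n$, at least two terms of $S$ are coprime to $p$. Let $n'=n/p'$ and let $S'$ be the image of $S$ under the natural map $\mathbb{Z}_n\to\mathbb{Z}_{n'}$. Suppose at most one term of $S'$ is a unit. Then $S$ is an $A$-weighted zero-sum sequence.
   Context: $\mathbb{Z}_m$ is the integers mod $m$, $U(m)$ its unit group. For $A\subseteq\mathbb{Z}_n$, a sequence $(x_1,\ldots,x_l)$ is an $A$-weighted zero-sum sequence if there exist $a_1,\ldots,a_l\in A$ with $\sum a_ix_i=0$. For odd $m=\prod p_i^{r_i}$, prime $p\mid m$ and $a\in U(m)$, $\left(\frac{a}{p}\right)$ is the Legendre symbol of the image mod $p$ and $\left(\frac{a}{m}\right)=\prod\left(\frac{a}{p_i}\right)^{r_i}$; $L(m;p')=\{a\in U(m):\left(\frac{a}{m}\right)=\left(\frac{a}{p'}\right)\}$ for a prime $p'\mid m$. *)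

theory Defs
  imports "HOL-Number_Theory.Number_Theory" "HOL-Computational_Algebra.Squarefree"
begin

(* Elements of Z_m are represented by naturals in {0..<m}; a is a unit iff coprime a m. *)

definition jacobi_sym :: "nat \<Rightarrow> nat \<Rightarrow> int" where
  "jacobi_sym a m = (\<Prod>p\<in>prime_factors m. Legendre (int a) (int p) ^ multiplicity p m)"

definition Lset :: "nat \<Rightarrow> nat \<Rightarrow> nat set" where
  "Lset m p' = {a. a < m \<and> coprime a m \<and> jacobi_sym a m = Legendre (int a) (int p')}"

definition weighted_zero_sum :: "nat \<Rightarrow> nat set \<Rightarrow> nat list \<Rightarrow> bool" where
  "weighted_zero_sum n A xs \<longleftrightarrow>
     (\<exists>ws. length ws = length xs \<and> set ws \<subseteq> A \<and>
        (\<Sum>i<length xs. ws ! i * xs ! i) mod n = 0)"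

end

theory Submission
  imports Defs
begin


lemma sqf_dvd:
  fixes n m :: nat
  assumes "squarefree n" "\<forall>q. prime q \<and> q dvd n \<longrightarrow> q dvd m"
  shows "n dvd m"
proof (cases "m = 0")
  case True then show ?thesis by simp
next
  case False
  have n0: "n \<noteq> 0" using assms(1) by (metis not_squarefree_0)
  show ?thesis
  proof (rule multiplicity_le_imp_dvd[OF n0])
    fix p :: nat assume p: "prime p"
    show "multiplicity p n \<le> multiplicity p m"
    proof (cases "p dvd n")
      case True
      then have "multiplicity p n = 1" using assms(1) n0 p
        by (simp add: squarefree_factorial_semiring' prime_factors_dvd)
      moreover have "multiplicity p m \<ge> 1" using assms(2) True p False
        using prime_multiplicity_gt_zero_iff[of p m] by (simp add: Suc_le_eq)
      ultimately show ?thesis by simp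
    next
      case False then show ?thesis by (simp add: not_dvd_imp_multiplicity_0)
    qed
  qed
qed

lemma coprime_from_primes:
  fixes a n :: nat
  assumes "\<forall>q. prime q \<and> q dvd n \<longrightarrow> \<not> q dvd a"
  shows "coprime a n"
proof (rule ccontr)
  assume "\<not> coprime a n"
  then obtain c where c: "c dvd a" "c dvd n" "\<not> is_unit c" by (rule not_coprimeE)
  then have "c \<noteq> 1" by auto
  then obtain p where "prime p" "p dvd c" using prime_factor_nat by blast
  then show False using assms c by (meson dvd_trans)
qed

lemma legendre_cong:
  assumes "[a = b] (mod p)"
  shows "Legendre a p = Legendre b p"
proof -
  have 1: "[a = 0] (mod p) \<longleftrightarrow> [b = 0] (mod p)" using assms cong_sym cong_trans by blast
  have 2: "QuadRes p a \<longleftrightarrow> QuadRes p b" unfolding QuadRes_def using assms cong_sym cong_trans by blast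
  show ?thesis unfolding Legendre_def using 1 2 by simp
qed

lemma legendre_one:
  assumes "prime (q::nat)"
  shows "Legendre 1 (int q) = 1"
proof -
  have "\<not> [1 = 0] (mod int q)" using assms
    by (auto simp add: cong_0_iff)
  moreover have "QuadRes (int q) 1" unfolding QuadRes_def by (rule exI[of _ 1]) simp
  ultimately show ?thesis by (simp add: Legendre_def)
qed

lemma nonres:
  assumes "prime (q::nat)" "q > 2"
  shows "\<exists>g::nat. \<not> q dvd g \<and> Legendre (int g) (int q) = -1"
proof -
  obtain g where g: "residue_primroot q g" using prime_primitive_root_exists assms prime_gt_1_nat by blast
  then have cop: "coprime q g" and ordg: "ord q g = q - 1"
    using assms by (auto simp: residue_primroot_def totient_prime)
  have nd: "\<not> q dvd g" using cop assms
    by (metis coprime_common_divisor dvd_refl not_prime_unit)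
  have "Legendre (int g) (int q) \<noteq> 0"
    using nd by (simp add: Legendre_def cong_0_iff)
  moreover have "Legendre (int g) (int q) \<noteq> 1"
  proof
    assume L: "Legendre (int g) (int q) = 1"
    have "[Legendre (int g) (int q) = int g ^ ((q - 1) div 2)] (mod int q)"
      using euler_criterion assms by blast
    then have "[int 1 = int (g ^ ((q - 1) div 2))] (mod int q)" using L by simp
    then have "[g ^ ((q - 1) div 2) = 1] (mod q)" using cong_int_iff cong_sym by blast
    then have "ord q g dvd (q - 1) div 2" using ord_divides by blast
    moreover have "(q - 1) div 2 > 0" using assms by simp
    ultimately have "q - 1 \<le> (q - 1) div 2" using ordg by (metis dvd_imp_le)
    then show False using assms by simp
  qed
  ultimately have "Legendre (int g) (int q) = -1" by (simp add: Legendre_def split: if_splits)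
  then show ?thesis using nd by blast
qed

lemma prod_pm1:
  assumes "\<forall>x\<in>A. f x \<in> {1, -1::int}"
  shows "prod f A \<in> {1, -1}"
  using assms
proof (induction A rule: infinite_finite_induct)
  case (insert x F) then show ?case by auto
qed auto


lemma step1:
  fixes q t :: int and x :: "nat \<Rightarrow> int"
  assumes "prime q" "q > 2" "finite J"
    "card {i\<in>J. \<not> q dvd x i} \<ge> 2 \<or> ((\<exists>i\<in>J. \<not> q dvd x i) \<and> \<not> q dvd t)"
  shows "\<exists>c. (\<forall>i\<in>J. \<not> q dvd c i) \<and> q dvd (\<Sum>i\<in>J. c i * x i) - t"
  using assms(3,4)
proof (induction J arbitrary: t rule: finite_induct)
  case empty then show ?case by simp
next
  case (insert k J)
  have q2: "\<not> q dvd 2" using assms(1,2) by (metis zdvd_imp_le zero_less_numeral not_less)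
  have q1: "\<not> q dvd 1" using assms(1) by (metis not_prime_unit)
  show ?case
  proof (cases "q dvd x k")
    case True
    have "{i\<in>insert k J. \<not> q dvd x i} = {i\<in>J. \<not> q dvd x i}" using True by auto
    then have "card {i\<in>J. \<not> q dvd x i} \<ge> 2 \<or> ((\<exists>i\<in>J. \<not> q dvd x i) \<and> \<not> q dvd t)"
      using insert.prems True by auto
    then obtain c where c: "\<forall>i\<in>J. \<not> q dvd c i" "q dvd (\<Sum>i\<in>J. c i * x i) - t"
      using insert.IH by blast
    let ?c = "c(k := 1)"
    have "(\<Sum>i\<in>insert k J. ?c i * x i) = ?c k * x k + (\<Sum>i\<in>J. ?c i * x i)"
      by (rule sum.insert[OF insert.hyps(1,2)])
    also have "(\<Sum>i\<in>J. ?c i * x i) = (\<Sum>i\<in>J. c i * x i)"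
      using insert.hyps by (intro sum.cong) auto
    finally have "(\<Sum>i\<in>insert k J. ?c i * x i) = x k + (\<Sum>i\<in>J. c i * x i)" by simp
    then have A: "q dvd (\<Sum>i\<in>insert k J. ?c i * x i) - t"
      using True c(2) by (metis add_diff_eq dvd_add)
    have B: "\<forall>i\<in>insert k J. \<not> q dvd ?c i" using c(1) q1 by auto
    show ?thesis by (rule exI[of _ ?c], rule conjI[OF B A])
  next
    case False
    show ?thesis
    proof (cases "\<exists>i\<in>J. \<not> q dvd x i")
      case True
      obtain a where a: "a \<in> {1, 2}" "\<not> q dvd t - a * x k"
      proof -
        have "\<not> (q dvd t - 1 * x k \<and> q dvd t - 2 * x k)"
        proof
          assume "q dvd t - 1 * x k \<and> q dvd t - 2 * x k"
          then have "q dvd (t - 1 * x k) - (t - 2 * x k)" by (meson dvd_diff)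
          then show False using False by simp
        qed
        then show ?thesis using that by blast
      qed
      then obtain c where c: "\<forall>i\<in>J. \<not> q dvd c i" "q dvd (\<Sum>i\<in>J. c i * x i) - (t - a * x k)"
        using insert.IH True by blast
      let ?c = "c(k := a)"
      have "(\<Sum>i\<in>insert k J. ?c i * x i) = ?c k * x k + (\<Sum>i\<in>J. ?c i * x i)"
        by (rule sum.insert[OF insert.hyps(1,2)])
      also have "(\<Sum>i\<in>J. ?c i * x i) = (\<Sum>i\<in>J. c i * x i)"
        using insert.hyps by (intro sum.cong) auto
      finally have "(\<Sum>i\<in>insert k J. ?c i * x i) = a * x k + (\<Sum>i\<in>J. c i * x i)" by simp
      then have "(\<Sum>i\<in>insert k J. ?c i * x i) - t = (\<Sum>i\<in>J. c i * x i) - (t - a * x k)"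
        by simp
      then have A: "q dvd (\<Sum>i\<in>insert k J. ?c i * x i) - t" using c(2) by (simp only:)
      have B: "\<forall>i\<in>insert k J. \<not> q dvd ?c i" using c(1) q1 q2 a(1) by auto
      show ?thesis by (rule exI[of _ ?c], rule conjI[OF B A])
    next
      case nJ: False
      have "{i\<in>insert k J. \<not> q dvd x i} = {k}" using nJ False by auto
      then have nt: "\<not> q dvd t" using insert.prems by auto
      have "coprime (x k) q" using False assms(1) prime_imp_coprime coprime_commute by blast
      then obtain y where y: "[x k * y = 1] (mod q)" using cong_solve_coprime_int by blast
      have ny: "\<not> q dvd y" using y q1
        by (metis cong_dvd_iff dvd_mult)
      let ?a = "t * y"
      have na: "\<not> q dvd ?a" using nt ny assms(1) by (simp add: prime_dvd_mult_iff)
      let ?c = "(\<lambda>i. if i = k then ?a else 1)"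
      have "(\<Sum>i\<in>insert k J. ?c i * x i) = ?c k * x k + (\<Sum>i\<in>J. ?c i * x i)"
        by (rule sum.insert[OF insert.hyps(1,2)])
      also have "(\<Sum>i\<in>J. ?c i * x i) = (\<Sum>i\<in>J. x i)"
        using insert.hyps by (intro sum.cong) auto
      finally have s: "(\<Sum>i\<in>insert k J. ?c i * x i) = ?a * x k + (\<Sum>i\<in>J. x i)" by simp
      have "q dvd (\<Sum>i\<in>J. x i)" using nJ by (auto intro: dvd_sum)
      moreover have "q dvd ?a * x k - t"
      proof -
        have "q dvd x k * y - 1" using y by (simp add: cong_iff_dvd_diff)
        then have "q dvd t * (x k * y - 1)" by simp
        then show ?thesis by (simp add: algebra_simps)
      qed
      ultimately have "q dvd (\<Sum>i\<in>J. x i) + (?a * x k - t)" by (rule dvd_add)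
      moreover have "(\<Sum>i\<in>insert k J. ?c i * x i) - t = (\<Sum>i\<in>J. x i) + (?a * x k - t)"
        unfolding s by simp
      ultimately have A: "q dvd (\<Sum>i\<in>insert k J. ?c i * x i) - t" by (simp only:)
      have B: "\<forall>i\<in>insert k J. \<not> q dvd ?c i" using na q1 by auto
      show ?thesis by (rule exI[of _ ?c], rule conjI[OF B A])
    qed
  qed
qed


lemma cop_prime:
  fixes a q :: nat
  assumes "prime q"
  shows "coprime a q \<longleftrightarrow> \<not> q dvd a"
proof
  assume c: "coprime a q"
  show "\<not> q dvd a"
  proof
    assume "q dvd a"
    then have "is_unit q" using coprime_common_divisor[OF c _ dvd_refl] by blast
    then show False using assms by simp
  qed
next
  assume "\<not> q dvd a"
  then have "coprime q a" by (rule prime_imp_coprime[OF assms])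
  then show "coprime a q" by (simp add: ac_simps)
qed

lemma leg_pm1:
  assumes "\<not> [a = 0] (mod p)"
  shows "Legendre a p \<in> {1, -1}"
  using assms by (simp add: Legendre_def)

theorem lemma3p6:
  fixes n p' :: nat and xs :: "nat list"
  assumes "odd n" and "squarefree n"
    and "prime p'" and "p' dvd n"
    and "set xs \<subseteq> {..<n}"
    and "\<forall>p. prime p \<and> p dvd n \<longrightarrow> card {i. i < length xs \<and> coprime (xs ! i) p} \<ge> 2"
    and "card {i. i < length xs \<and> coprime (xs ! i mod (n div p')) (n div p')} \<le> 1"
  shows "weighted_zero_sum n (Lset n p') xs"
proof -
  define len where "len = length xs"
  define n' where "n' = n div p'"
  define P where "P = prime_factors n"
  have n0: "n > 0" using assms(1) by (cases n) auto
  have finP: "finite P" unfolding P_def by simp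
  have Piff: "q \<in> P \<longleftrightarrow> prime q \<and> q dvd n" for q
    unfolding P_def using n0 by (auto simp: prime_factors_dvd)
  have P2: "q > 2" if "q \<in> P" for q
  proof -
    have "prime q" "q dvd n" using that Piff by auto
    moreover have "q \<noteq> 2" using \<open>q dvd n\<close> assms(1) by auto
    ultimately show ?thesis using prime_ge_2_nat[of q] by linarith
  qed
  have p'P: "p' \<in> P" using Piff assms(3,4) by blast
  have nn: "n = p' * n'" unfolding n'_def using assms(4) by simp
  have np: "\<not> p' dvd n'"
  proof
    assume "p' dvd n'"
    then have "p' ^ 2 dvd n" unfolding nn by (simp add: power2_eq_square)
    then have "p' dvd 1" using assms(2) squarefreeD by blast
    then show False using assms(3) by simp
  qed
  define Q where "Q = P - {p'}"
  have finQ: "finite Q" unfolding Q_def using finP by simp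
  have Qiff: "q \<in> Q \<longleftrightarrow> prime q \<and> q dvd n'" for q
  proof
    assume "q \<in> Q"
    then have q: "prime q" "q dvd n" "q \<noteq> p'" unfolding Q_def using Piff by auto
    then have "q dvd p' \<or> q dvd n'" unfolding nn using prime_dvd_mult_iff by blast
    moreover have "\<not> q dvd p'" using q assms(3) primes_dvd_imp_eq by blast
    ultimately show "prime q \<and> q dvd n'" using q by blast
  next
    assume "prime q \<and> q dvd n'"
    then show "q \<in> Q" unfolding Q_def using Piff np nn by auto
  qed
  have QP: "Q \<subseteq> P" unfolding Q_def by auto
  have prP: "prime q" if "q \<in> P" for q using that Piff by auto

  define U where "U = {i. i < len \<and> coprime (xs ! i mod n') n'}"
  have finU: "finite U" unfolding U_def by simp
  have cardU: "card U \<le> Suc 0" using assms(7) unfolding U_def len_def n'_def by simp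
  have len2: "len \<ge> 2"
  proof -
    have "card {i. i < length xs \<and> coprime (xs ! i) p'} \<ge> 2" using assms(6,3,4) by blast
    moreover have "card {i. i < length xs \<and> coprime (xs ! i) p'} \<le> card {..<len}"
      unfolding len_def by (rule card_mono) auto
    ultimately show ?thesis by simp
  qed
  define j where "j = (if U = {} then 0 else (SOME i. i \<in> U))"
  have jlen: "j < len"
  proof (cases "U = {}")
    case True then show ?thesis unfolding j_def using len2 by simp
  next
    case False
    then have "j \<in> U" unfolding j_def by (simp add: some_in_eq)
    then show ?thesis unfolding U_def by simp
  qed
  have notU: "\<not> coprime (xs ! i mod n') n'" if "i < len" "i \<noteq> j" for i
  proof
    assume c: "coprime (xs ! i mod n') n'"
    then have iU: "i \<in> U" unfolding U_def using that by simp
    then have "U \<noteq> {}" by auto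
    then have "j \<in> U" unfolding j_def by (simp add: some_in_eq)
    then show False using iU cardU finU that(2) card_le_Suc0_iff_eq by blast
  qed
  have hr: "\<exists>q. q \<in> Q \<and> q dvd xs ! i" if hi: "i < len" "i \<noteq> j" for i
  proof -
    have nc: "\<not> coprime (xs ! i mod n') n'" using notU[OF hi] .
    obtain c where c: "c dvd xs ! i mod n'" "c dvd n'" "\<not> is_unit c"
      using nc by (rule not_coprimeE)
    then have "c \<noteq> 1" by auto
    then obtain q where q: "prime q" "q dvd c" using prime_factor_nat by blast
    then have "q dvd n'" using c by (meson dvd_trans)
    moreover have "q dvd xs ! i mod n'" using q c by (meson dvd_trans)
    ultimately have "q dvd xs ! i" using dvd_mod_iff by blast
    then show ?thesis using Qiff q \<open>q dvd n'\<close> by blast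
  qed
  obtain r where r: "\<And>i. i < len \<Longrightarrow> i \<noteq> j \<Longrightarrow> r i \<in> Q \<and> r i dvd xs ! i"
  proof -
    have "\<forall>i. \<exists>q. i < len \<and> i \<noteq> j \<longrightarrow> q \<in> Q \<and> q dvd xs ! i" using hr by blast
    then have "\<exists>r. \<forall>i. i < len \<and> i \<noteq> j \<longrightarrow> r i \<in> Q \<and> r i dvd xs ! i" by (rule choice)
    then obtain r where "\<forall>i. i < len \<and> i \<noteq> j \<longrightarrow> r i \<in> Q \<and> r i dvd xs ! i" by blast
    then show ?thesis using that by blast
  qed

  define J where "J = {..<len} - {j}"
  have finJ: "finite J" unfolding J_def by simp
  have st: "\<exists>c. (\<forall>i\<in>J. \<not> int q dvd c i) \<and>
      int q dvd (\<Sum>i\<in>J. c i * int (xs ! i)) - (- int (xs ! j))" if qP: "q \<in> P" for q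
  proof (rule step1)
    show "prime (int q)" using prP[OF qP] by simp
    show "int q > 2" using P2[OF qP] by simp
    show "finite J" by (rule finJ)
    define K where "K = {i. i < len \<and> coprime (xs ! i) q}"
    have K2: "card K \<ge> 2" unfolding K_def len_def using assms(6) Piff qP by blast
    have finK: "finite K" unfolding K_def by simp
    have KJ: "{i\<in>J. \<not> int q dvd int (xs ! i)} = K - {j}"
      unfolding K_def J_def using cop_prime[OF prP[OF qP]] by (auto simp: int_dvd_int_iff)
    show "card {i\<in>J. \<not> int q dvd int (xs ! i)} \<ge> 2 \<or>
      ((\<exists>i\<in>J. \<not> int q dvd int (xs ! i)) \<and> \<not> int q dvd - int (xs ! j))"
    proof (cases "q dvd xs ! j")
      case True
      then have "j \<notin> K" unfolding K_def using cop_prime[OF prP[OF qP]] by auto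
      then have "K - {j} = K" by auto
      then show ?thesis using KJ K2 by simp
    next
      case False
      then have "j \<in> K" unfolding K_def using cop_prime[OF prP[OF qP]] jlen by auto
      then have "card (K - {j}) \<ge> 1" using K2 finK by (simp add: card_Diff_singleton)
      then have "K - {j} \<noteq> {}" by (metis card.empty not_one_le_zero)
      then obtain i0 where "i0 \<in> K - {j}" by blast
      then have "i0 \<in> {i\<in>J. \<not> int q dvd int (xs ! i)}" unfolding KJ .
      then have "\<exists>i\<in>J. \<not> int q dvd int (xs ! i)" by blast
      moreover have "\<not> int q dvd - int (xs ! j)" using False by (simp add: int_dvd_int_iff)
      ultimately show ?thesis by blast
    qed
  qed
  obtain c where c: "\<And>q. q \<in> P \<Longrightarrow> (\<forall>i\<in>J. \<not> int q dvd c q i) \<and>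
      int q dvd (\<Sum>i\<in>J. c q i * int (xs ! i)) - (- int (xs ! j))"
  proof -
    have "\<forall>q\<in>P. \<exists>c. (\<forall>i\<in>J. \<not> int q dvd c i) \<and>
      int q dvd (\<Sum>i\<in>J. c i * int (xs ! i)) - (- int (xs ! j))" using st by blast
    then have "\<exists>c. \<forall>q\<in>P. (\<forall>i\<in>J. \<not> int q dvd c q i) \<and>
      int q dvd (\<Sum>i\<in>J. c q i * int (xs ! i)) - (- int (xs ! j))" by (rule bchoice)
    then obtain c where "\<forall>q\<in>P. (\<forall>i\<in>J. \<not> int q dvd c q i) \<and>
      int q dvd (\<Sum>i\<in>J. c q i * int (xs ! i)) - (- int (xs ! j))" by blast
    then show ?thesis using that by blast
  qed
  define e where "e q i = (if i = j then 1 else nat (c q i mod int q))" for q i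
  have inte: "int (e q i) = (if i = j then 1 else c q i mod int q)" if "q \<in> P" for q i
    using P2[OF that] unfolding e_def by simp
  have he1: "\<not> q dvd e q i" if "q \<in> P" "i < len" for q i
  proof (cases "i = j")
    case True then show ?thesis unfolding e_def using prP[OF that(1)] by auto
  next
    case False
    then have "i \<in> J" unfolding J_def using that by simp
    then have "\<not> int q dvd c q i" using c[OF that(1)] by blast
    then have "\<not> int q dvd int (e q i)" using inte[OF that(1)] False by (simp add: dvd_mod_iff)
    then show ?thesis by (simp add: int_dvd_int_iff)
  qed
  have he2: "q dvd (\<Sum>i<len. e q i * xs ! i)" if qP: "q \<in> P" for q
  proof -
    define c' where "c' i = (if i = j then 1 else c q i)" for i
    have "[(\<Sum>i<len. int (e q i) * int (xs ! i)) = (\<Sum>i<len. c' i * int (xs ! i))] (mod int q)"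
    proof (rule cong_sum, rule cong_mult)
      fix i show "[int (e q i) = c' i] (mod int q)"
        unfolding c'_def using inte[OF qP] by (simp add: cong_def)
    qed (rule cong_refl)
    moreover have "(\<Sum>i<len. c' i * int (xs ! i)) = c' j * int (xs ! j) + (\<Sum>i\<in>J. c' i * int (xs ! i))"
      unfolding J_def using jlen by (simp add: sum.remove)
    moreover have "(\<Sum>i\<in>J. c' i * int (xs ! i)) = (\<Sum>i\<in>J. c q i * int (xs ! i))"
      unfolding J_def c'_def by (intro sum.cong) auto
    ultimately have "[int (\<Sum>i<len. e q i * xs ! i) = int (xs ! j) + (\<Sum>i\<in>J. c q i * int (xs ! i))] (mod int q)"
      unfolding c'_def by simp
    moreover have "int q dvd int (xs ! j) + (\<Sum>i\<in>J. c q i * int (xs ! i))"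
      using c[OF qP] by (simp add: add.commute)
    ultimately have "int q dvd int (\<Sum>i<len. e q i * xs ! i)" using cong_dvd_iff by blast
    then show ?thesis using int_dvd_int_iff by blast
  qed
  obtain g where g: "\<And>q. q \<in> P \<Longrightarrow> \<not> q dvd g q \<and> Legendre (int (g q)) (int q) = -1"
  proof -
    have "\<forall>q\<in>P. \<exists>g. \<not> q dvd g \<and> Legendre (int g) (int q) = -1"
      using nonres prP P2 by blast
    then have "\<exists>g. \<forall>q\<in>P. \<not> q dvd g q \<and> Legendre (int (g q)) (int q) = -1"
      by (rule bchoice)
    then obtain g where "\<forall>q\<in>P. \<not> q dvd g q \<and> Legendre (int (g q)) (int q) = -1"
      by blast
    then show ?thesis using that by blast
  qed
  have legpm: "Legendre (int a) (int q) \<in> {1, -1}" if "q \<in> P" "\<not> q dvd a" for q a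
  proof (rule leg_pm1)
    show "\<not> [int a = 0] (mod int q)" using that(2) by (simp add: cong_0_iff int_dvd_int_iff)
  qed
  define s where "s i = (\<Prod>q\<in>Q - {r i}. Legendre (int (e q i)) (int q))" for i
  have hs: "s i \<in> {1, -1}" if hi: "i < len" for i
    unfolding s_def
  proof (rule prod_pm1, intro ballI)
    fix q assume "q \<in> Q - {r i}"
    then have qP: "q \<in> P" using QP by auto
    show "Legendre (int (e q i)) (int q) \<in> {1, -1}" using legpm[OF qP he1[OF qP hi]] .
  qed
  define d where "d q i = (if i < len \<and> i \<noteq> j \<and> q = r i then (if s i = 1 then 1 else g q) else e q i)" for q i
  have hd1: "\<not> q dvd d q i" if "q \<in> P" "i < len" for q i
    unfolding d_def using he1[OF that] g[OF that(1)] prP[OF that(1)] by auto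
  have hd2: "q dvd (\<Sum>i<len. d q i * xs ! i)" if qP: "q \<in> P" for q
  proof -
    have "[(\<Sum>i<len. d q i * xs ! i) = (\<Sum>i<len. e q i * xs ! i)] (mod q)"
    proof (rule cong_sum)
      fix i assume i: "i \<in> {..<len}"
      show "[d q i * xs ! i = e q i * xs ! i] (mod q)"
      proof (cases "i \<noteq> j \<and> q = r i")
        case True
        then have "q dvd xs ! i" using r i by auto
        then show ?thesis by (simp add: cong_def)
      next
        case False then show ?thesis unfolding d_def by auto
      qed
    qed
    then show ?thesis using he2[OF qP] cong_dvd_iff by blast
  qed
  have hd3: "(\<Prod>q\<in>Q. Legendre (int (d q i)) (int q)) = 1" if i: "i < len" for i
  proof (cases "i = j")
    case True
    have "(\<Prod>q\<in>Q. Legendre (int (d q i)) (int q)) = (\<Prod>q\<in>Q. 1)"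
      using True QP prP legendre_one unfolding d_def e_def by (intro prod.cong) auto
    then show ?thesis by simp
  next
    case False
    have ri: "r i \<in> Q" using r i False by blast
    have "(\<Prod>q\<in>Q. Legendre (int (d q i)) (int q)) =
        Legendre (int (d (r i) i)) (int (r i)) * (\<Prod>q\<in>Q - {r i}. Legendre (int (d q i)) (int q))"
      using ri finQ by (simp add: prod.remove)
    also have "(\<Prod>q\<in>Q - {r i}. Legendre (int (d q i)) (int q)) = s i"
      unfolding s_def d_def by (intro prod.cong) auto
    also have "Legendre (int (d (r i) i)) (int (r i)) = s i"
    proof -
      have "r i \<in> P" using ri QP by auto
      then show ?thesis using hs[OF i] g legendre_one prP unfolding d_def using i False by auto
    qed
    finally show ?thesis using hs[OF i] by auto
  qed
  have crt: "\<exists>a. \<forall>q\<in>P. [a = d q i] (mod q)" for i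
  proof -
    have "\<forall>a\<in>P. \<forall>b\<in>P. a \<noteq> b \<longrightarrow> coprime (id a) (id b)" by (auto intro!: primes_coprime prP)
    then have "\<exists>x. \<forall>q\<in>P. [x = d q i] (mod id q)"
      by (rule chinese_remainder_nat[OF finP])
    then show ?thesis by simp
  qed
  obtain A where A: "\<And>i. \<forall>q\<in>P. [A i = d q i] (mod q)"
  proof -
    have "\<forall>i. \<exists>a. \<forall>q\<in>P. [a = d q i] (mod q)" using crt by blast
    then have "\<exists>A. \<forall>i. \<forall>q\<in>P. [A i = d q i] (mod q)" by (rule choice)
    then show ?thesis using that by blast
  qed
  define w where "w i = A i mod n" for i
  have hw: "[w i = d q i] (mod q)" if "q \<in> P" for q i
  proof -
    have "q dvd n" using that Piff by auto
    then have "[w i = A i] (mod q)" unfolding w_def cong_def by (simp add: mod_mod_cancel)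
    then show ?thesis using A that cong_trans by blast
  qed
  define ws where "ws = map w [0..<len]"
  have wL: "w i \<in> Lset n p'" if i: "i < len" for i
  proof -
    have lt: "w i < n" unfolding w_def using n0 by simp
    have cop: "coprime (w i) n"
    proof (rule coprime_from_primes, intro allI impI)
      fix q assume "prime q \<and> q dvd n"
      then have qP: "q \<in> P" using Piff by auto
      show "\<not> q dvd w i" using hd1[OF qP i] cong_dvd_iff[OF hw[OF qP]] by blast
    qed
    have mult: "multiplicity q n = 1" if "q \<in> P" for q
      using assms(2) n0 that unfolding P_def by (simp add: squarefree_factorial_semiring')
    have "jacobi_sym (w i) n = (\<Prod>q\<in>P. Legendre (int (w i)) (int q))"
      unfolding jacobi_sym_def P_def[symmetric] using mult by (intro prod.cong) auto
    also have "\<dots> = Legendre (int (w i)) (int p') * (\<Prod>q\<in>Q. Legendre (int (w i)) (int q))"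
      unfolding Q_def using finP p'P by (simp add: prod.remove)
    also have "(\<Prod>q\<in>Q. Legendre (int (w i)) (int q)) = (\<Prod>q\<in>Q. Legendre (int (d q i)) (int q))"
    proof (intro prod.cong refl)
      fix q assume "q \<in> Q"
      then have "q \<in> P" using QP by auto
      then show "Legendre (int (w i)) (int q) = Legendre (int (d q i)) (int q)"
        using hw by (intro legendre_cong) (simp add: cong_int_iff)
    qed
    also have "\<dots> = 1" using hd3[OF i] .
    finally show ?thesis unfolding Lset_def using lt cop by simp
  qed
  have sumdvd: "n dvd (\<Sum>i<len. w i * xs ! i)"
  proof (rule sqf_dvd[OF assms(2)], intro allI impI)
    fix q assume "prime q \<and> q dvd n"
    then have qP: "q \<in> P" using Piff by auto
    have "[(\<Sum>i<len. w i * xs ! i) = (\<Sum>i<len. d q i * xs ! i)] (mod q)"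
      by (intro cong_sum cong_mult hw[OF qP] cong_refl)
    then show "q dvd (\<Sum>i<len. w i * xs ! i)" using hd2[OF qP] cong_dvd_iff by blast
  qed
  show ?thesis
    unfolding weighted_zero_sum_def
  proof (intro exI[of _ ws] conjI)
    show "length ws = length xs" unfolding ws_def len_def by simp
    show "set ws \<subseteq> Lset n p'" unfolding ws_def using wL by auto
    have "(\<Sum>i<length xs. ws ! i * xs ! i) = (\<Sum>i<len. w i * xs ! i)"
      unfolding ws_def len_def by (intro sum.cong) auto
    then show "(\<Sum>i<length xs. ws ! i * xs ! i) mod n = 0" using sumdvd by simp
  qed
qed

end
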